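(* Assume (A1)–(A3). Then for each $i=1,2$, $V_{R^i}>0$ on $\mathcal I$ and $R^i>0$ on $(\alpha,x_{R^i}]$.
   Context: $\mathcal I=(\alpha,\beta)$ with $-\infty\le\alpha<\beta\le\infty$; $b,\sigma$ continuous on $\mathcal I$, $\sigma>0$; $X$ is the coordinate process on the canonical space of continuous paths, with $\mathbf P_x$ the law of the (unique in law) weak solution of $\mathrm dX_t=b(X_t)\mathrm dt+\sigma(X_t)\mathrm dW_t$, $X_0=x$, whose endpoints are natural. $\mathcal T$ is the set of stopping times of the usual augmentation of the natural filtration of $X$. Fix $r>0$, $\mathcal Lu=bu'+\tfrac12\sigma^2u''$. Convention $f(X_\tau)=0$ on $\{\tau=\infty\}$. $R^i\in C^2(\mathcal I)$ satisfies (A1) $\mathbf E_x[\sup_{t\ge0}e^{-rt}|R^i(X_t)|]<\infty$ for each $x$; (A2) $e^{-rt}R^i(X_t)\to0$ $\mathbf P_x$-a.s. for each $x$; (A3) there is $x^i_0\in\mathcal I$ with $\mathcal LR^i-rR^i<0$ on $(\alpha,x^i_0)$ and $>0$ on $(x^i_0,\beta)$. $V_{R^i}(x)=\sup_{\tau\in\mathcal T}\mathbf E_x[e^{-r\tau}R^i(X_\tau)]$, and $x_{R^i}<x^i_0$ is the threshold such that $\{x:V_{R^i}(x)=R^i(x)\}=(\alpha,x_{R^i}]$. *)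

theory Defs
  imports "HOL-Probability.Probability"
begin

definition open_ivl :: "ereal \<Rightarrow> ereal \<Rightarrow> real set" where
  "open_ivl \<alpha> \<beta> = {x. \<alpha> < ereal x \<and> ereal x < \<beta>}"

(* Canonical space of continuous I-valued paths on [0,oo); a path is normalised
   to be constant on (-oo,0] so that paths are determined by their restriction to [0,oo). *)
definition paths :: "ereal \<Rightarrow> ereal \<Rightarrow> (real \<Rightarrow> real) set" where
  "paths \<alpha> \<beta> = {\<omega>. continuous_on UNIV \<omega> \<and> (\<forall>t\<le>0. \<omega> t = \<omega> 0) \<and> (\<forall>t. \<omega> t \<in> open_ivl \<alpha> \<beta>)}"

definition nat_filt :: "(real \<Rightarrow> real) set \<Rightarrow> real \<Rightarrow> (real \<Rightarrow> real) measure" where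
  "nat_filt \<Omega> t = sigma \<Omega> {{\<omega>\<in>\<Omega>. \<omega> s \<in> B} | s B. 0 \<le> s \<and> s \<le> t \<and> B \<in> sets borel}"

definition canon :: "(real \<Rightarrow> real) set \<Rightarrow> (real \<Rightarrow> real) measure" where
  "canon \<Omega> = sigma \<Omega> {{\<omega>\<in>\<Omega>. \<omega> s \<in> B} | s B. 0 \<le> s \<and> B \<in> sets borel}"

(* Usual augmentation of the natural filtration (right-continuous F_{t+} augmented by
   the P_x-null sets), taken simultaneously for all starting points x in I. *)
definition aug_sets :: "(real \<Rightarrow> real) set \<Rightarrow> (real \<Rightarrow> (real \<Rightarrow> real) measure) \<Rightarrow> real set
                         \<Rightarrow> real \<Rightarrow> (real \<Rightarrow> real) set set" where
  "aug_sets \<Omega> P I t = {A. A \<subseteq> \<Omega> \<and> (\<forall>x\<in>I. \<exists>B N. (\<forall>u>t. B \<in> sets (nat_filt \<Omega> u))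
        \<and> N \<in> sets (canon \<Omega>) \<and> emeasure (P x) N = 0 \<and> (A - B) \<union> (B - A) \<subseteq> N)}"

definition stop_times :: "(real \<Rightarrow> real) set \<Rightarrow> (real \<Rightarrow> (real \<Rightarrow> real) measure) \<Rightarrow> real set
                         \<Rightarrow> ((real \<Rightarrow> real) \<Rightarrow> ennreal) set" where
  "stop_times \<Omega> P I = {\<tau>. \<forall>t\<ge>0. {\<omega>\<in>\<Omega>. \<tau> \<omega> \<le> ennreal t} \<in> aug_sets \<Omega> P I t}"

definition disc_payoff :: "real \<Rightarrow> (real \<Rightarrow> real) \<Rightarrow> ((real \<Rightarrow> real) \<Rightarrow> ennreal) \<Rightarrow> (real \<Rightarrow> real) \<Rightarrow> real" where
  "disc_payoff r R \<tau> \<omega> = (if \<tau> \<omega> = \<infinity> then 0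
      else exp (- r * enn2real (\<tau> \<omega>)) * R (\<omega> (enn2real (\<tau> \<omega>))))"

definition value_fn :: "ereal \<Rightarrow> ereal \<Rightarrow> (real \<Rightarrow> (real \<Rightarrow> real) measure) \<Rightarrow> real \<Rightarrow> (real \<Rightarrow> real) \<Rightarrow> real \<Rightarrow> real" where
  "value_fn \<alpha> \<beta> P r R x = (SUP \<tau> \<in> stop_times (paths \<alpha> \<beta>) P (open_ivl \<alpha> \<beta>).
      integral\<^sup>L (completion (P x)) (disc_payoff r R \<tau>))"

definition gen :: "(real \<Rightarrow> real) \<Rightarrow> (real \<Rightarrow> real) \<Rightarrow> (real \<Rightarrow> real) \<Rightarrow> real \<Rightarrow> real" where
  "gen b \<sigma> u y = b y * deriv u y + 1/2 * (\<sigma> y)\<^sup>2 * deriv (deriv u) y"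

definition C2_on :: "real set \<Rightarrow> (real \<Rightarrow> real) \<Rightarrow> bool" where
  "C2_on S u \<longleftrightarrow> (\<exists>u' u''. (\<forall>y\<in>S. (u has_real_derivative u' y) (at y)
       \<and> (u' has_real_derivative u'' y) (at y)) \<and> continuous_on S u'')"

definition test_fun :: "real set \<Rightarrow> (real \<Rightarrow> real) \<Rightarrow> bool" where
  "test_fun I f \<longleftrightarrow> C2_on UNIV f \<and> (\<exists>a c. a \<in> I \<and> c \<in> I \<and> (\<forall>y. y \<notin> {a..c} \<longrightarrow> f y = 0))"

(* Q is (the law of) a weak solution of dX = b(X)dt + sigma(X)dW, X_0 = x, on the canonical
   space, expressed through the (equivalent, Stroock-Varadhan) martingale problem. *)
definition solves_MP :: "ereal \<Rightarrow> ereal \<Rightarrow> (real \<Rightarrow> real) \<Rightarrow> (real \<Rightarrow> real) \<Rightarrow> real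
                          \<Rightarrow> (real \<Rightarrow> real) measure \<Rightarrow> bool" where
  "solves_MP \<alpha> \<beta> b \<sigma> x Q \<longleftrightarrow> prob_space Q \<and> sets Q = sets (canon (paths \<alpha> \<beta>))
     \<and> (AE \<omega> in Q. \<omega> 0 = x)
     \<and> (\<forall>f. test_fun (open_ivl \<alpha> \<beta>) f \<longrightarrow>
          (let M = (\<lambda>t \<omega>. f (\<omega> t) - f (\<omega> 0) - integral {0..t} (\<lambda>s. gen b \<sigma> f (\<omega> s))) in
           \<forall>t\<ge>0. integrable Q (M t) \<and> M t \<in> borel_measurable (nat_filt (paths \<alpha> \<beta>) t)
             \<and> (\<forall>s A. 0 \<le> s \<longrightarrow> s \<le> t \<longrightarrow> A \<in> sets (nat_filt (paths \<alpha> \<beta>) s) \<longrightarrow>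
                  (\<integral>\<omega>\<in>A. M t \<omega> \<partial>Q) = (\<integral>\<omega>\<in>A. M s \<omega> \<partial>Q))))"

definition scale_dens :: "(real \<Rightarrow> real) \<Rightarrow> (real \<Rightarrow> real) \<Rightarrow> real \<Rightarrow> real \<Rightarrow> real" where
  "scale_dens b \<sigma> c y = exp (- (LBINT z=ereal c..ereal y. 2 * b z / (\<sigma> z)\<^sup>2))"

definition speed_dens :: "(real \<Rightarrow> real) \<Rightarrow> (real \<Rightarrow> real) \<Rightarrow> real \<Rightarrow> real \<Rightarrow> real" where
  "speed_dens b \<sigma> c y = 2 / ((\<sigma> y)\<^sup>2 * scale_dens b \<sigma> c y)"

(* Feller's test: both endpoints natural, i.e. Sigma = oo and N = oo at alpha and at beta *)
definition natural_endpoints :: "ereal \<Rightarrow> ereal \<Rightarrow> (real \<Rightarrow> real) \<Rightarrow> (real \<Rightarrow> real) \<Rightarrow> bool" where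
  "natural_endpoints \<alpha> \<beta> b \<sigma> \<longleftrightarrow> (\<exists>c. \<alpha> < ereal c \<and> ereal c < \<beta> \<and>
     (let s = scale_dens b \<sigma> c; m = speed_dens b \<sigma> c in
      (\<integral>\<^sup>+ \<eta>. indicator {\<eta>. c < \<eta> \<and> ereal \<eta> < \<beta>} \<eta> * ennreal (s \<eta> * (LBINT \<xi>=ereal c..ereal \<eta>. m \<xi>)) \<partial>lborel) = \<infinity>
    \<and> (\<integral>\<^sup>+ \<eta>. indicator {\<eta>. c < \<eta> \<and> ereal \<eta> < \<beta>} \<eta> * ennreal (m \<eta> * (LBINT \<xi>=ereal c..ereal \<eta>. s \<xi>)) \<partial>lborel) = \<infinity>
    \<and> (\<integral>\<^sup>+ \<eta>. indicator {\<eta>. \<alpha> < ereal \<eta> \<and> \<eta> < c} \<eta> * ennreal (s \<eta> * (LBINT \<xi>=ereal \<eta>..ereal c. m \<xi>)) \<partial>lborel) = \<infinity>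
    \<and> (\<integral>\<^sup>+ \<eta>. indicator {\<eta>. \<alpha> < ereal \<eta> \<and> \<eta> < c} \<eta> * ennreal (m \<eta> * (LBINT \<xi>=ereal \<eta>..ereal c. s \<xi>)) \<partial>lborel) = \<infinity>))"

end

theory Submission
  imports Defs
begin

definition tp :: "nat \<Rightarrow> real \<Rightarrow> real" where "tp n z = (max 0 z) ^ n"

lemma tp_nonneg: "tp n z \<ge> 0" by (simp add: tp_def)
lemma tp_pos: "z > 0 \<Longrightarrow> tp n z = z ^ n" by (simp add: tp_def)
lemma tp_neg: "z \<le> 0 \<Longrightarrow> n > 0 \<Longrightarrow> tp n z = 0" by (simp add: tp_def max_def)

lemma tp_deriv0:
  assumes n: "n \<ge> 2"
  shows "(tp n has_real_derivative (real n * tp (n-1) z)) (at z)"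
proof (cases "z > 0")
  case True
  have "((\<lambda>y. y ^ n) has_real_derivative (real n * z ^ (n-1))) (at z)"
    by (rule derivative_eq_intros refl)+ simp
  then have "(tp n has_real_derivative (real n * z ^ (n-1))) (at z)"
    apply (rule has_field_derivative_transform_within_open[where S="{0<..}"])
    using True by (auto simp: tp_def)
  then show ?thesis using True by (simp add: tp_pos)
next
  case False
  show ?thesis
  proof (cases "z < 0")
    case True
    have "((\<lambda>y. 0) has_real_derivative 0) (at z)" by simp
    then have "(tp n has_real_derivative 0) (at z)"
      apply (rule has_field_derivative_transform_within_open[where S="{..<0}"])
      using True n by (auto simp: tp_def max_def)
    then show ?thesis using True n by (simp add: tp_neg)
  next
    case False
    with \<open>\<not> z > 0\<close> have z: "z = 0" by simp
    have "((\<lambda>y. (tp n y - tp n 0) / (y - 0)) \<longlongrightarrow> 0) (at 0)"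
    proof (rule Lim_null_comparison)
      show "eventually (\<lambda>y. norm ((tp n y - tp n 0) / (y - 0)) \<le> \<bar>y\<bar> ^ (n-1)) (at (0::real))"
      proof (rule always_eventually, intro allI)
        fix y :: real
        have t0: "tp n 0 = 0" using n by (simp add: tp_neg)
        have h1: "\<bar>tp n y\<bar> \<le> \<bar>y\<bar> ^ n"
          unfolding tp_def by (auto simp: max_def intro!: power_mono)
        have h2: "\<bar>y\<bar> ^ n = \<bar>y\<bar> * \<bar>y\<bar> ^ (n-1)" 
        proof -
          obtain m where "n = Suc m" using n by (cases n) auto
          then show ?thesis by simp
        qed
        show "norm ((tp n y - tp n 0) / (y - 0)) \<le> \<bar>y\<bar> ^ (n-1)"
          
        proof (cases "y = 0")
          case False
          then have "\<bar>tp n y\<bar> / \<bar>y\<bar> \<le> \<bar>y\<bar> ^ (n-1)"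
            using h1 h2 by (simp add: divide_le_eq mult.commute)
          then show ?thesis using \<open>tp n 0 = 0\<close> by (simp add: abs_divide)
        qed (simp add: tp_nonneg)
      qed
      have "((\<lambda>y::real. \<bar>y\<bar> ^ (n-1)) \<longlongrightarrow> \<bar>0\<bar> ^ (n-1)) (at 0)"
        by (intro tendsto_intros)
      moreover have "(0::real) ^ (n-1) = 0" using n by simp
      ultimately show "((\<lambda>y::real. \<bar>y\<bar> ^ (n-1)) \<longlongrightarrow> 0) (at 0)" by (simp only: abs_zero)
    qed
    then have "(tp n has_real_derivative 0) (at 0)"
      by (simp add: has_field_derivative_iff)
    then show ?thesis using z n by (simp add: tp_neg)
  qed
qed

lemma tp_deriv[derivative_intros]:
  assumes n: "n \<ge> 2" and f: "(f has_real_derivative f') (at x within s)"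
  shows "((\<lambda>x. tp n (f x)) has_real_derivative (real n * tp (n-1) (f x) * f')) (at x within s)"
  using DERIV_chain2[OF tp_deriv0[OF n] f] by simp

lemma tp_cont[continuous_intros]: "continuous_on S f \<Longrightarrow> continuous_on S (\<lambda>x. tp n (f x))"
  unfolding tp_def by (intro continuous_intros)

definition S0 :: "real \<Rightarrow> real" where
  "S0 u = tp 3 u * (10 - 15*u + 6*u^2) - tp 3 (u-1) * (6*u^2 + 3*u + 1)"
definition S1 :: "real \<Rightarrow> real" where
  "S1 u = 3 * tp 2 u * (10 - 15*u + 6*u^2) + tp 3 u * (12*u - 15)
        - (3 * tp 2 (u-1) * (6*u^2 + 3*u + 1) + tp 3 (u-1) * (12*u + 3))"
definition S2 :: "real \<Rightarrow> real" where
  "S2 u = 6 * tp 1 u * (10 - 15*u + 6*u^2) + 6 * tp 2 u * (12*u - 15) + 12 * tp 3 u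
        - (6 * tp 1 (u-1) * (6*u^2 + 3*u + 1) + 6 * tp 2 (u-1) * (12*u + 3) + 12 * tp 3 (u-1))"

lemma S0_deriv: "(S0 has_real_derivative S1 u) (at u)"
proof -
  have "((\<lambda>u. tp 3 u * (10 - 15*u + 6*u^2) - tp 3 (u-1) * (6*u^2 + 3*u + 1)) has_real_derivative S1 u) (at u)"
    unfolding S1_def
    by (rule derivative_eq_intros refl | simp add: algebra_simps)+
  then show ?thesis unfolding S0_def[abs_def] .
qed

lemma S1_deriv: "(S1 has_real_derivative S2 u) (at u)"
proof -
  have "((\<lambda>u. 3 * tp 2 u * (10 - 15*u + 6*u^2) + tp 3 u * (12*u - 15)
        - (3 * tp 2 (u-1) * (6*u^2 + 3*u + 1) + tp 3 (u-1) * (12*u + 3))) has_real_derivative S2 u) (at u)"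
    unfolding S2_def
    by (rule derivative_eq_intros refl | simp add: algebra_simps)+
  then show ?thesis unfolding S1_def[abs_def] .
qed

lemma S2_cont: "continuous_on UNIV S2"
  unfolding S2_def[abs_def] by (intro continuous_intros)

lemma S_ge1: assumes "u \<ge> 1" shows "S0 u = 1" "S1 u = 0" "S2 u = 0"
proof -
  have a: "tp n u = u ^ n" "tp n (u-1) = (u-1)^n" if "n > 0" for n
    using assms that by (auto simp: tp_def max_def)
  show "S0 u = 1" unfolding S0_def a[OF zero_less_numeral] by (simp add: algebra_simps power2_eq_square power3_eq_cube)
  show "S1 u = 0" unfolding S1_def a[OF zero_less_numeral] by (simp add: algebra_simps power2_eq_square power3_eq_cube)
  show "S2 u = 0" unfolding S2_def a[OF zero_less_numeral] a[OF zero_less_one] by (simp add: algebra_simps power2_eq_square power3_eq_cube)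
qed

lemma S_le0: assumes "u \<le> 0" shows "S0 u = 0" "S1 u = 0" "S2 u = 0"
  using assms by (auto simp: S0_def S1_def S2_def tp_neg)

definition tf :: "nat \<Rightarrow> real \<Rightarrow> real \<Rightarrow> real \<Rightarrow> real \<Rightarrow> real \<Rightarrow> real" where
  "tf k p q p2 q2 y = tp k (p*y+q) * S0 (p2*y+q2)"
definition tf1 :: "nat \<Rightarrow> real \<Rightarrow> real \<Rightarrow> real \<Rightarrow> real \<Rightarrow> real \<Rightarrow> real" where
  "tf1 k p q p2 q2 y = p * real k * tp (k-1) (p*y+q) * S0 (p2*y+q2) + p2 * tp k (p*y+q) * S1 (p2*y+q2)"
definition tf2 :: "nat \<Rightarrow> real \<Rightarrow> real \<Rightarrow> real \<Rightarrow> real \<Rightarrow> real \<Rightarrow> real" where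
  "tf2 k p q p2 q2 y = p^2 * real k * real (k-1) * tp (k-2) (p*y+q) * S0 (p2*y+q2)
     + 2 * p * p2 * real k * tp (k-1) (p*y+q) * S1 (p2*y+q2) + p2^2 * tp k (p*y+q) * S2 (p2*y+q2)"

lemma S0_deriv'[derivative_intros]:
  "(g has_real_derivative g') (at x within s) \<Longrightarrow> ((\<lambda>x. S0 (g x)) has_real_derivative (S1 (g x) * g')) (at x within s)"
  using DERIV_chain2[OF S0_deriv] by blast
lemma S1_deriv'[derivative_intros]:
  "(g has_real_derivative g') (at x within s) \<Longrightarrow> ((\<lambda>x. S1 (g x)) has_real_derivative (S2 (g x) * g')) (at x within s)"
  using DERIV_chain2[OF S1_deriv] by blast

lemma tf_deriv:
  assumes k: "k \<ge> 3"
  shows "(tf k p q p2 q2 has_real_derivative tf1 k p q p2 q2 y) (at y)"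
proof -
  have k2: "2 \<le> k" "2 \<le> k - 1" "2 \<le> k - Suc 0" using k by auto
  have "((\<lambda>y. tp k (p*y+q) * S0 (p2*y+q2)) has_real_derivative tf1 k p q p2 q2 y) (at y)"
    unfolding tf1_def
    apply (rule derivative_eq_intros refl | simp add: k2)+
    done
  then show ?thesis unfolding tf_def[abs_def] .
qed

lemma tf1_deriv:
  assumes k: "k \<ge> 3"
  shows "(tf1 k p q p2 q2 has_real_derivative tf2 k p q p2 q2 y) (at y)"
proof -
  have e: "k - 1 - 1 = k - 2" and e2: "k - Suc (Suc 0) = k - 2" by simp_all
  have k2: "2 \<le> k" "2 \<le> k - 1" "2 \<le> k - Suc 0" using k by auto
  have "((\<lambda>y. p * real k * tp (k-1) (p*y+q) * S0 (p2*y+q2) + p2 * tp k (p*y+q) * S1 (p2*y+q2))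
     has_real_derivative tf2 k p q p2 q2 y) (at y)"
    unfolding tf2_def
    apply (rule derivative_eq_intros refl | simp add: k2)+
    apply (simp add: e2 power2_eq_square mult_ac)
    done
  then show ?thesis unfolding tf1_def[abs_def] .
qed

lemma S2_cont'[continuous_intros]: "continuous_on A g \<Longrightarrow> continuous_on A (\<lambda>x. S2 (g x))"
  using continuous_on_compose2[OF S2_cont] by blast
lemma S0_cont'[continuous_intros]: "continuous_on A g \<Longrightarrow> continuous_on A (\<lambda>x. S0 (g x))"
proof -
  have "continuous_on UNIV S0" using S0_deriv
    by (meson DERIV_isCont continuous_at_imp_continuous_on)
  then show "continuous_on A g \<Longrightarrow> continuous_on A (\<lambda>x. S0 (g x))"
    using continuous_on_compose2 by blast
qed
lemma S1_cont'[continuous_intros]: "continuous_on A g \<Longrightarrow> continuous_on A (\<lambda>x. S1 (g x))"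
proof -
  have "continuous_on UNIV S1" using S1_deriv
    by (meson DERIV_isCont continuous_at_imp_continuous_on)
  then show "continuous_on A g \<Longrightarrow> continuous_on A (\<lambda>x. S1 (g x))"
    using continuous_on_compose2 by blast
qed

lemma tf2_cont: "continuous_on UNIV (tf2 k p q p2 q2)"
  unfolding tf2_def[abs_def] by (intro continuous_intros)

lemma deriv_tf: "k \<ge> 3 \<Longrightarrow> deriv (tf k p q p2 q2) = tf1 k p q p2 q2"
  using tf_deriv DERIV_imp_deriv by blast
lemma deriv_tf1: "k \<ge> 3 \<Longrightarrow> deriv (tf1 k p q p2 q2) = tf2 k p q p2 q2"
  using tf1_deriv DERIV_imp_deriv by blast

lemma gen_tf: "k \<ge> 3 \<Longrightarrow> gen b \<sigma> (tf k p q p2 q2) y = b y * tf1 k p q p2 q2 y + 1/2 * (\<sigma> y)^2 * tf2 k p q p2 q2 y"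
  by (simp add: gen_def deriv_tf deriv_tf1)

lemma C2_tf: "k \<ge> 3 \<Longrightarrow> C2_on UNIV (tf k p q p2 q2)"
  unfolding C2_on_def using tf_deriv tf1_deriv tf2_cont by blast

lemma k_choice:
  fixes B L s0 :: real
  assumes "s0 > 0" "B \<ge> 0" "L \<ge> 0"
  obtains k :: nat where "k \<ge> 3" "real k * (s0^2/2 * (real k - 1) - B*L) \<ge> L^2"
proof -
  define k where "k = 3 + nat \<lceil>2*(B*L + L^2)/s0^2\<rceil>"
  have s2: "s0^2 > 0" using assms by simp
  have "real k - 1 \<ge> 2*(B*L + L^2)/s0^2" unfolding k_def by linarith
  then have "s0^2/2 * (real k - 1) \<ge> s0^2/2 * (2*(B*L + L^2)/s0^2)"
    using s2 by (intro mult_left_mono) auto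
  also have "s0^2/2 * (2*(B*L + L^2)/s0^2) = B*L + L^2" using s2 by (simp add: field_simps)
  finally have br: "s0^2/2 * (real k - 1) - B*L \<ge> L^2" by simp
  have k3: "k \<ge> 3" unfolding k_def by simp
  have "real k * (s0^2/2 * (real k - 1) - B*L) \<ge> 1 * L^2"
    using br k3 by (intro mult_mono) auto
  then show ?thesis using that k3 by simp
qed

lemma tf_ineq:
  fixes k :: nat and p q p2 q2 y B L s0 bv sy :: real
  assumes k3: "k \<ge> 3" and p: "p^2 = 1" and w: "p2*y+q2 \<ge> 1"
    and bnd: "p*y+q > 0 \<Longrightarrow> \<bar>bv\<bar> \<le> B \<and> sy \<ge> s0 \<and> p*y+q \<le> L"
    and s0: "s0 > 0" and B: "B \<ge> 0" and L: "L \<ge> 0"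
    and kL: "real k * (s0^2/2 * (real k - 1) - B*L) \<ge> L^2"
  shows "bv * tf1 k p q p2 q2 y + 1/2 * sy^2 * tf2 k p q p2 q2 y \<ge> tf k p q p2 q2 y"
proof -
  note S = S_ge1[OF w]
  define z where "z = p*y+q"
  have e1: "tf1 k p q p2 q2 y = p * real k * tp (k-1) z" by (simp add: tf1_def S z_def)
  have e2: "tf2 k p q p2 q2 y = real k * real (k-1) * tp (k-2) z" by (simp add: tf2_def S z_def p)
  have e0: "tf k p q p2 q2 y = tp k z" by (simp add: tf_def S z_def)
  show ?thesis
  proof (cases "z > 0")
    case False
    then show ?thesis using k3 by (simp add: e0 e1 e2 tp_neg)
  next
    case True
    from bnd True have b: "\<bar>bv\<bar> \<le> B" and sy: "sy \<ge> s0" and zL: "z \<le> L" by (auto simp: z_def)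
    have pz: "\<bar>p\<bar> = 1" using p by (metis abs_power2 power2_eq_1_iff abs_1 abs_neg_one)
    define m where "m = z ^ (k-2)"
    have m0: "m \<ge> 0" using True by (simp add: m_def)
    have kk1: "k - 1 = Suc (k-2)" and kk: "k = Suc (Suc (k-2))" using k3 by simp_all
    have zk1: "tp (k-1) z = z * m" unfolding m_def using True
      by (subst kk1) (simp add: tp_pos)
    have zk: "tp k z = z^2 * m" unfolding m_def using True
      by (subst kk) (simp add: tp_pos power2_eq_square)
    have zk2: "tp (k-2) z = m" unfolding m_def using True by (simp add: tp_pos)
    have "p*bv*z \<ge> - (B*L)"
    proof -
      have "\<bar>p*bv*z\<bar> = \<bar>bv\<bar> * z" using pz True by (simp add: abs_mult)
      also have "\<dots> \<le> B * L" using b zL True B by (intro mult_mono) auto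
      finally show ?thesis by linarith
    qed
    have "sy^2 \<ge> s0^2" using sy s0 by (intro power_mono) auto
    have "real (k-1) = real k - 1" using k3 by simp
    have br: "p*bv*z + sy^2/2 * real (k-1) \<ge> s0^2/2 * (real k - 1) - B*L"
    proof -
      have "sy^2/2 * (real k - 1) \<ge> s0^2/2 * (real k - 1)"
        using \<open>sy^2 \<ge> s0^2\<close> k3 by (intro mult_right_mono) auto
      then show ?thesis unfolding \<open>real (k-1) = real k - 1\<close> using \<open>p*bv*z \<ge> - (B*L)\<close> by linarith
    qed
    have kbr: "real k * (p*bv*z + sy^2/2 * real (k-1)) \<ge> z^2"
    proof -
      have "z^2 \<le> L^2" using True zL by (intro power_mono) auto
      also have "\<dots> \<le> real k * (s0^2/2 * (real k - 1) - B*L)" by (rule kL)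
      also have "\<dots> \<le> real k * (p*bv*z + sy^2/2 * real (k-1))" using br by (intro mult_left_mono) auto
      finally show ?thesis .
    qed
    have "bv * tf1 k p q p2 q2 y + 1/2 * sy^2 * tf2 k p q p2 q2 y
          = m * (real k * (p*bv*z + sy^2/2 * real (k-1)))"
      unfolding e1 e2 zk1 zk2 by (simp add: algebra_simps)
    also have "\<dots> \<ge> m * z^2" using kbr m0 by (intro mult_left_mono) auto
    finally show ?thesis by (simp add: e0 zk mult.commute)
  qed
qed

lemma nat_filt_gen_sub: "{{\<omega>\<in>\<Omega>. \<omega> s \<in> B} | s B. 0 \<le> s \<and> s \<le> t \<and> B \<in> sets borel} \<subseteq> Pow \<Omega>"
  by auto
lemma canon_gen_sub: "{{\<omega>\<in>\<Omega>. \<omega> s \<in> B} | s B. 0 \<le> s \<and> B \<in> sets borel} \<subseteq> Pow \<Omega>"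
  by auto

lemma space_nat_filt[simp]: "space (nat_filt \<Omega> t) = \<Omega>"
  unfolding nat_filt_def by (rule space_measure_of[OF nat_filt_gen_sub])
lemma sets_nat_filt: "sets (nat_filt \<Omega> t) = sigma_sets \<Omega> {{\<omega>\<in>\<Omega>. \<omega> s \<in> B} | s B. 0 \<le> s \<and> s \<le> t \<and> B \<in> sets borel}"
  unfolding nat_filt_def by (rule sets_measure_of[OF nat_filt_gen_sub])
lemma space_canon[simp]: "space (canon \<Omega>) = \<Omega>"
  unfolding canon_def by (rule space_measure_of[OF canon_gen_sub])
lemma sets_canon: "sets (canon \<Omega>) = sigma_sets \<Omega> {{\<omega>\<in>\<Omega>. \<omega> s \<in> B} | s B. 0 \<le> s \<and> B \<in> sets borel}"
  unfolding canon_def by (rule sets_measure_of[OF canon_gen_sub])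

lemma nat_filt_mono: "t \<le> u \<Longrightarrow> sets (nat_filt \<Omega> t) \<subseteq> sets (nat_filt \<Omega> u)"
  unfolding sets_nat_filt by (rule sigma_sets_mono') force

lemma nat_filt_canon: "sets (nat_filt \<Omega> t) \<subseteq> sets (canon \<Omega>)"
  unfolding sets_nat_filt sets_canon by (rule sigma_sets_mono') auto

lemma gen_in_nat_filt: "0 \<le> s \<Longrightarrow> s \<le> t \<Longrightarrow> B \<in> sets borel \<Longrightarrow> {\<omega>\<in>\<Omega>. \<omega> s \<in> B} \<in> sets (nat_filt \<Omega> t)"
  unfolding sets_nat_filt by (rule sigma_sets.Basic) blast

lemma eval_meas_nat_filt: "0 \<le> s \<Longrightarrow> s \<le> t \<Longrightarrow> (\<lambda>\<omega>. \<omega> s) \<in> measurable (nat_filt \<Omega> t) borel"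
proof (rule measurableI)
  fix A :: "real set" assume "0 \<le> s" "s \<le> t" "A \<in> sets borel"
  then have "{\<omega>\<in>\<Omega>. \<omega> s \<in> A} \<in> sets (nat_filt \<Omega> t)" by (rule gen_in_nat_filt)
  moreover have "(\<lambda>\<omega>. \<omega> s) -` A \<inter> space (nat_filt \<Omega> t) = {\<omega>\<in>\<Omega>. \<omega> s \<in> A}" by auto
  ultimately show "(\<lambda>\<omega>. \<omega> s) -` A \<inter> space (nat_filt \<Omega> t) \<in> sets (nat_filt \<Omega> t)" by simp
qed auto

lemma eval_meas_canon: "0 \<le> s \<Longrightarrow> (\<lambda>\<omega>. \<omega> s) \<in> measurable (canon \<Omega>) borel"
proof (rule measurableI)
  fix A :: "real set" assume "0 \<le> s" "A \<in> sets borel"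
  then have "{\<omega>\<in>\<Omega>. \<omega> s \<in> A} \<in> sets (canon \<Omega>)" unfolding sets_canon by (intro sigma_sets.Basic) blast
  moreover have "(\<lambda>\<omega>. \<omega> s) -` A \<inter> space (canon \<Omega>) = {\<omega>\<in>\<Omega>. \<omega> s \<in> A}" by auto
  ultimately show "(\<lambda>\<omega>. \<omega> s) -` A \<inter> space (canon \<Omega>) \<in> sets (canon \<Omega>)" by simp
qed auto

lemma stop_indicator:
  assumes t: "t \<ge> 0" and A: "A \<in> sets (nat_filt \<Omega> t)"
  shows "(\<lambda>\<omega>. if \<omega> \<in> A then ennreal t else \<infinity>) \<in> stop_times \<Omega> P I"
  unfolding stop_times_def
proof (intro CollectI allI impI)
  fix s :: real assume s: "0 \<le> s"
  have Asub: "A \<subseteq> \<Omega>" using sets.sets_into_space[OF A] by simp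
  define E where "E = {\<omega> \<in> \<Omega>. (if \<omega> \<in> A then ennreal t else \<infinity>) \<le> ennreal s}"
  have E: "E = (if t \<le> s then A else {})" using Asub t s by (auto simp: E_def ennreal_le_iff top_unique)
  have EF: "\<forall>u>s. E \<in> sets (nat_filt \<Omega> u)"
  proof (intro allI impI)
    fix u assume "u > s"
    show "E \<in> sets (nat_filt \<Omega> u)"
    proof (cases "t \<le> s")
      case True
      then show ?thesis using E A nat_filt_mono[of t u \<Omega>] \<open>u > s\<close> by auto
    qed (simp add: E)
  qed
  have "E \<in> aug_sets \<Omega> P I s"
    unfolding aug_sets_def
  proof (intro CollectI conjI ballI)
    show "E \<subseteq> \<Omega>" unfolding E_def by auto
    fix x assume "x \<in> I"
    show "\<exists>B N. (\<forall>u>s. B \<in> sets (nat_filt \<Omega> u)) \<and> N \<in> sets (canon \<Omega>) \<and> emeasure (P x) N = 0 \<and> (E - B) \<union> (B - E) \<subseteq> N"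
      by (rule exI[of _ E], rule exI[of _ "{}"]) (use EF in auto)
  qed
  then show "{\<omega> \<in> \<Omega>. (if \<omega> \<in> A then ennreal t else \<infinity>) \<le> ennreal s} \<in> aug_sets \<Omega> P I s"
    unfolding E_def .
qed

lemma disc_indicator:
  "t \<ge> 0 \<Longrightarrow> disc_payoff r R (\<lambda>\<omega>. if \<omega> \<in> A then ennreal t else \<infinity>) \<omega> = (if \<omega> \<in> A then exp (- r * t) * R (\<omega> t) else 0)"
  by (simp add: disc_payoff_def)

lemma disc_bound:
  "ennreal \<bar>disc_payoff r R \<tau> \<omega>\<bar> \<le> (SUP t\<in>{0..}. ennreal (exp (- r * t) * \<bar>R (\<omega> t)\<bar>))"
proof (cases "\<tau> \<omega> = \<infinity>")
  case True
  then show ?thesis by (simp add: disc_payoff_def)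
next
  case False
  define t where "t = enn2real (\<tau> \<omega>)"
  have t0: "t \<in> {0..}" by (simp add: t_def)
  have "ennreal \<bar>disc_payoff r R \<tau> \<omega>\<bar> = ennreal (exp (- r * t) * \<bar>R (\<omega> t)\<bar>)"
    using False by (simp add: disc_payoff_def t_def abs_mult)
  also have "\<dots> \<le> (SUP t\<in>{0..}. ennreal (exp (- r * t) * \<bar>R (\<omega> t)\<bar>))"
    using t0 by (rule SUP_upper)
  finally show ?thesis .
qed

lemma integral_disc_le:
  assumes fin: "(\<integral>\<^sup>+ \<omega>. (SUP t\<in>{0..}. ennreal (exp (- r * t) * \<bar>R (\<omega> t)\<bar>)) \<partial>M) < \<infinity>"
  shows "integral\<^sup>L (completion M) (disc_payoff r R \<tau>) \<le> enn2real (\<integral>\<^sup>+ \<omega>. (SUP t\<in>{0..}. ennreal (exp (- r * t) * \<bar>R (\<omega> t)\<bar>)) \<partial>M)"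
    (is "?I \<le> enn2real ?D")
proof (cases "integrable (completion M) (disc_payoff r R \<tau>)")
  case False
  then show ?thesis by (simp add: not_integrable_integral_eq)
next
  case True
  have "ennreal (norm ?I) \<le> (\<integral>\<^sup>+ \<omega>. norm (disc_payoff r R \<tau> \<omega>) \<partial>completion M)"
    using integral_norm_bound_ennreal[OF True] by simp
  also have "\<dots> \<le> (\<integral>\<^sup>+ \<omega>. (SUP t\<in>{0..}. ennreal (exp (- r * t) * \<bar>R (\<omega> t)\<bar>)) \<partial>completion M)"
    by (intro nn_integral_mono) (use disc_bound in simp)
  also have "\<dots> = ?D" by (rule nn_integral_completion)
  finally have "ennreal (norm ?I) \<le> ?D" .
  then have "enn2real (ennreal (norm ?I)) \<le> enn2real ?D" using fin by (intro enn2real_mono) auto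
  then have "norm ?I \<le> enn2real ?D" by simp
  then show ?thesis by simp
qed

lemma integral_split_sum:
  fixes h :: "real \<Rightarrow> real" and t :: real and N :: nat
  assumes h: "continuous_on {0..t} h" and t: "t \<ge> 0" and N: "N > 0"
  shows "m \<le> N \<Longrightarrow> integral {0..t * m / N} h = (\<Sum>i<m. integral {t*i/N..t*(Suc i)/N} h)"
proof (induction m)
  case 0
  then show ?case by simp
next
  case (Suc m)
  have le1: "t * m / N \<le> t * Suc m / N" using t N by (intro divide_right_mono mult_left_mono) auto
  have le0: "0 \<le> t * m / N" using t N by simp
  have le2: "t * Suc m / N \<le> t" using t N Suc.prems
    by (simp add: divide_le_eq mult_left_mono)
  have "h integrable_on {0..t * Suc m / N}"
    by (rule integrable_continuous_interval) (rule continuous_on_subset[OF h], use le2 in auto)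
  then have "integral {0..t * m / N} h + integral {t * m / N..t * Suc m / N} h = integral {0..t * Suc m / N} h"
    by (rule Henstock_Kurzweil_Integration.integral_combine[OF le0 le1])
  then show ?case using Suc by simp
qed

lemma riemann_conv:
  fixes h :: "real \<Rightarrow> real" and t :: real
  assumes h: "continuous_on {0..t} h" and t: "t \<ge> 0"
  shows "(\<lambda>n. (\<Sum>i<Suc n. h (t * i / Suc n)) * (t / Suc n)) \<longlonglongrightarrow> integral {0..t} h"
proof (rule LIMSEQ_I)
  fix r :: real assume r: "r > 0"
  define e where "e = r / (2 * (t + 1))"
  have e: "e > 0" using r t by (simp add: e_def)
  have "uniformly_continuous_on {0..t} h" by (rule compact_uniformly_continuous[OF h]) simp
  then obtain d where d: "d > 0" and dd: "\<And>x x'. x \<in> {0..t} \<Longrightarrow> x' \<in> {0..t} \<Longrightarrow> dist x' x < d \<Longrightarrow> dist (h x') (h x) < e"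
    unfolding uniformly_continuous_on_def using e by metis
  obtain no :: nat where no: "real no > t / d" using reals_Archimedean2 by blast
  show "\<exists>no. \<forall>n\<ge>no. norm ((\<Sum>i<Suc n. h (t * i / Suc n)) * (t / Suc n) - integral {0..t} h) < r"
  proof (intro exI allI impI)
    fix n assume n: "no \<le> n"
    define N where "N = Suc n"
    have N: "N > 0" by (simp add: N_def)
    define D where "D = t / N"
    have D0: "D \<ge> 0" using t by (simp add: D_def)
    have Dd: "D < d"
    proof -
      have "t / d < real N" using no n by (simp add: N_def)
      then have "t < real N * d" using d by (simp add: divide_less_eq mult.commute)
      then show ?thesis using N by (simp add: D_def divide_less_eq mult.commute)
    qed
    have x_eq: "t * i / N = D * i" for i :: nat by (simp add: D_def)
    have split: "integral {0..t} h = (\<Sum>i<N. integral {t*i/N..t*(Suc i)/N} h)"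
      using integral_split_sum[OF h t N, of N] N by simp
    have piece: "\<bar>integral {t*i/N..t*(Suc i)/N} h - h (t * i / N) * D\<bar> \<le> e * D" if i: "i < N" for i
    proof -
      define a where "a = t*i/N"
      define b where "b = t*(Suc i)/N"
      have ab: "a \<le> b" "b - a = D" using t N by (simp_all add: a_def b_def D_def divide_right_mono mult_left_mono field_simps)
      have a0: "0 \<le> a" using t by (simp add: a_def)
      have bt: "b \<le> t" using t N i by (simp add: b_def divide_le_eq mult_left_mono)
      have sub: "{a..b} \<subseteq> {0..t}" using a0 bt by auto
      have hi: "h integrable_on {a..b}" by (rule integrable_continuous_interval, rule continuous_on_subset[OF h sub])
      have "((\<lambda>s. h s - h a) has_integral (integral {a..b} h - h a * D)) (cbox a b)"
      proof -
        have "((\<lambda>s. h s - h a) has_integral (integral {a..b} h - D * h a)) {a..b}"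
          using has_integral_diff[OF integrable_integral[OF hi] has_integral_const_real[of "h a" a b]] ab
          by (simp add: ac_simps)
        then show ?thesis by (metis mult.commute box_real(2))
      qed
      moreover have "norm (h s - h a) \<le> e" if "s \<in> cbox a b" for s
      proof -
        have "s \<in> {0..t}" "a \<in> {0..t}" using that sub by auto
        moreover have "dist s a < d" using that ab Dd by (auto simp: dist_real_def)
        ultimately have "dist (h s) (h a) < e" using dd by blast
        then show ?thesis by (simp add: dist_real_def)
      qed
      ultimately have "norm (integral {a..b} h - h a * D) \<le> e * measure lborel (cbox a b)"
        using e by (intro has_integral_bound[where f="\<lambda>s. h s - h a"]) auto
      then show ?thesis using ab by (simp add: a_def b_def)
    qed
    have "\<bar>(\<Sum>i<N. h (t * i / N)) * D - integral {0..t} h\<bar>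
        = \<bar>\<Sum>i<N. (integral {t*i/N..t*(Suc i)/N} h - h (t * i / N) * D)\<bar>"
      unfolding split by (simp add: sum_subtractf sum_distrib_right)
    also have "\<dots> \<le> (\<Sum>i<N. \<bar>integral {t*i/N..t*(Suc i)/N} h - h (t * i / N) * D\<bar>)"
      by (rule sum_abs)
    also have "\<dots> \<le> (\<Sum>i<N. e * D)" by (intro sum_mono piece) simp
    also have "\<dots> = e * t" using N by (simp add: D_def)
    also have "\<dots> < r"
    proof -
      have "e * t = r * t / (2 * (t + 1))" by (simp add: e_def)
      also have "\<dots> < r" using r t by (simp add: divide_less_eq)
      finally show ?thesis .
    qed
    finally show "norm ((\<Sum>i<Suc n. h (t * i / Suc n)) * (t / Suc n) - integral {0..t} h) < r"
      by (simp add: N_def D_def)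
  qed
qed

lemma core:
  fixes Q :: "(real \<Rightarrow> real) measure" and f :: "real \<Rightarrow> real"
  assumes MP: "solves_MP \<alpha> \<beta> b \<sigma> x Q"
    and tf: "test_fun (open_ivl \<alpha> \<beta>) f"
    and fcont: "continuous_on UNIV f"
    and gcont: "continuous_on (open_ivl \<alpha> \<beta>) (gen b \<sigma> f)"
    and good: "AE \<omega> in Q. \<forall>s\<ge>0. f (\<omega> s) \<ge> 0 \<and> gen b \<sigma> f (\<omega> s) \<ge> \<kappa> * f (\<omega> s)"
    and kappa: "\<kappa> > 0" and fx: "f x > 0"
  shows False
proof -
  define \<Omega> where "\<Omega> = paths \<alpha> \<beta>"
  define I where "I = open_ivl \<alpha> \<beta>"
  define g where "g = gen b \<sigma> f"
  have PS: "prob_space Q" and sQ: "sets Q = sets (canon \<Omega>)" and x0: "AE \<omega> in Q. \<omega> 0 = x"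
    using MP unfolding solves_MP_def \<Omega>_def by auto
  interpret prob_space Q by (rule PS)
  have spQ: "space Q = \<Omega>" using sets_eq_imp_space_eq[OF sQ] by simp
  define Mt where "Mt (t::real) (\<omega>::real\<Rightarrow>real) = f (\<omega> t) - f (\<omega> 0) - integral {0..t} (\<lambda>s. g (\<omega> s))" for t \<omega>
  have mp: "\<forall>t\<ge>0. integrable Q (Mt t) \<and> Mt t \<in> borel_measurable (nat_filt \<Omega> t)
             \<and> (\<forall>s A. 0 \<le> s \<longrightarrow> s \<le> t \<longrightarrow> A \<in> sets (nat_filt \<Omega> s) \<longrightarrow>
                  (\<integral>\<omega>\<in>A. Mt t \<omega> \<partial>Q) = (\<integral>\<omega>\<in>A. Mt s \<omega> \<partial>Q))"
  proof -
    have "test_fun (open_ivl \<alpha> \<beta>) f \<longrightarrow> (let M = (\<lambda>t \<omega>. f (\<omega> t) - f (\<omega> 0) - integral {0..t} (\<lambda>s. gen b \<sigma> f (\<omega> s))) in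
           \<forall>t\<ge>0. integrable Q (M t) \<and> M t \<in> borel_measurable (nat_filt (paths \<alpha> \<beta>) t)
             \<and> (\<forall>s A. 0 \<le> s \<longrightarrow> s \<le> t \<longrightarrow> A \<in> sets (nat_filt (paths \<alpha> \<beta>) s) \<longrightarrow>
                  (\<integral>\<omega>\<in>A. M t \<omega> \<partial>Q) = (\<integral>\<omega>\<in>A. M s \<omega> \<partial>Q)))"
      using MP unfolding solves_MP_def by blast
    with tf show ?thesis unfolding Let_def Mt_def[abs_def] g_def \<Omega>_def by blast
  qed
  obtain a c where ac: "\<forall>y. y \<notin> {a..c} \<longrightarrow> f y = 0" using tf unfolding test_fun_def by blast
  have "compact (f ` {a..c})" by (rule compact_continuous_image) (use fcont continuous_on_subset in auto)
  then obtain M0 where M0: "\<And>y. y \<in> {a..c} \<Longrightarrow> \<bar>f y\<bar> \<le> M0"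
    using compact_imp_bounded bounded_iff by (metis imageI real_norm_def)
  define Mf where "Mf = max M0 0"
  have Mf: "\<And>y. y \<in> {a..c} \<Longrightarrow> \<bar>f y\<bar> \<le> Mf" using M0 unfolding Mf_def by force
  have fb: "\<bar>f y\<bar> \<le> Mf" for y
  proof (cases "y \<in> {a..c}")
    case False then show ?thesis using ac by (simp add: Mf_def)
  qed (rule Mf)
  have Mf0: "Mf \<ge> 0" by (simp add: Mf_def)
  have fborel: "f \<in> borel_measurable borel" by (rule borel_measurable_continuous_onI[OF fcont])
  have evQ: "(\<lambda>\<omega>. \<omega> s) \<in> borel_measurable Q" if "s \<ge> 0" for s
    using eval_meas_canon[OF that, of \<Omega>] measurable_cong_sets[OF sQ refl] by blast
  have fmeas: "(\<lambda>\<omega>. f (\<omega> s)) \<in> borel_measurable Q" if "s \<ge> 0" for s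
    using measurable_compose[OF evQ[OF that] fborel] by simp
  have fint: "integrable Q (\<lambda>\<omega>. f (\<omega> s))" if "s \<ge> 0" for s
    by (rule Bochner_Integration.integrable_bound[where f="\<lambda>_. Mf"]) (use fmeas[OF that] fb Mf0 in auto)
  define u where "u s = (\<integral>\<omega>. f (\<omega> s) \<partial>Q)" for s
  have u0: "(\<integral>\<omega>. f (\<omega> 0) \<partial>Q) = f x"
  proof -
    have "(\<integral>\<omega>. f (\<omega> 0) \<partial>Q) = (\<integral>\<omega>. f x \<partial>Q)"
      by (rule integral_cong_AE) (use fmeas[of 0] x0 in auto)
    then show ?thesis by (simp add: prob_space)
  qed
  have ub: "u s \<le> Mf" if "s \<ge> 0" for s
  proof -
    have "u s \<le> (\<integral>\<omega>. Mf \<partial>Q)" unfolding u_def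
      by (rule integral_mono) (use fint[OF that] fb in \<open>auto simp: abs_le_iff\<close>)
    then show ?thesis by (simp add: prob_space)
  qed
  have pathI: "continuous_on UNIV \<omega> \<and> (\<forall>t. \<omega> t \<in> I)" if "\<omega> \<in> \<Omega>" for \<omega>
    using that unfolding \<Omega>_def paths_def I_def by auto
  have gpath: "continuous_on {0..t} (\<lambda>s. g (\<omega> s))" if "\<omega> \<in> \<Omega>" for \<omega> t
    using pathI[OF that] gcont unfolding g_def I_def
    by (intro continuous_on_compose2[OF gcont]) (auto intro: continuous_on_subset)
  have fpath: "continuous_on {0..t} (\<lambda>s. f (\<omega> s))" if "\<omega> \<in> \<Omega>" for \<omega> t
    using pathI[OF that] by (intro continuous_on_compose2[OF fcont]) (auto intro: continuous_on_subset)
  define F where "F (t::real) (\<omega>::real\<Rightarrow>real) = integral {0..t} (\<lambda>s. f (\<omega> s))" for t \<omega>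
  define Ig where "Ig (t::real) (\<omega>::real\<Rightarrow>real) = integral {0..t} (\<lambda>s. g (\<omega> s))" for t \<omega>
  have goodpath: "Ig t \<omega> \<ge> \<kappa> * F t \<omega> \<and> F t \<omega> \<ge> 0"
    if "\<omega> \<in> \<Omega>" "\<forall>s\<ge>0. f (\<omega> s) \<ge> 0 \<and> g (\<omega> s) \<ge> \<kappa> * f (\<omega> s)" for \<omega> t
  proof
    have "\<kappa> * F t \<omega> = integral {0..t} (\<lambda>s. \<kappa> * f (\<omega> s))" unfolding F_def by simp
    also have "\<dots> \<le> Ig t \<omega>" unfolding Ig_def
      by (rule integral_le) (use that gpath[OF that(1)] fpath[OF that(1)] in
          \<open>auto intro!: integrable_continuous_interval continuous_intros\<close>)
    finally show "Ig t \<omega> \<ge> \<kappa> * F t \<omega>" .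
    show "F t \<omega> \<ge> 0" unfolding F_def
      by (rule integral_nonneg) (use that fpath[OF that(1)] in \<open>auto intro!: integrable_continuous_interval\<close>)
  qed
  have good': "AE \<omega> in Q. \<forall>t. Ig t \<omega> \<ge> \<kappa> * F t \<omega> \<and> F t \<omega> \<ge> 0"
    using good AE_space
  proof eventually_elim
    case (elim \<omega>)
    then show ?case using goodpath[of \<omega>] spQ by (auto simp: g_def)
  qed
  have Ig_eq: "integrable Q (Ig t) \<and> (\<integral>\<omega>. Ig t \<omega> \<partial>Q) = u t - f x" if t: "t \<ge> 0" for t
  proof -
    from mp t have iM: "integrable Q (Mt t)"
      and eqA: "(\<integral>\<omega>\<in>\<Omega>. Mt t \<omega> \<partial>Q) = (\<integral>\<omega>\<in>\<Omega>. Mt 0 \<omega> \<partial>Q)"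
      using sets.top[of "nat_filt \<Omega> 0"] by auto
    have M0: "Mt 0 \<omega> = 0" for \<omega> by (simp add: Mt_def)
    have "(\<integral>\<omega>. Mt t \<omega> \<partial>Q) = 0"
      using eqA set_integral_space[OF iM] spQ by (simp add: M0)
    have IntM: "Ig t \<omega> = f (\<omega> t) - f (\<omega> 0) - Mt t \<omega>" for \<omega> by (simp add: Ig_def Mt_def)
    have iI: "integrable Q (Ig t)" unfolding IntM[abs_def]
      by (intro Bochner_Integration.integrable_diff fint[OF t] fint[OF order_refl] iM)
    have "(\<integral>\<omega>. Ig t \<omega> \<partial>Q) = u t - (\<integral>\<omega>. f (\<omega> 0) \<partial>Q) - (\<integral>\<omega>. Mt t \<omega> \<partial>Q)"
      unfolding IntM[abs_def] u_def
      by (simp add: Bochner_Integration.integral_diff Bochner_Integration.integrable_diff fint[OF t] fint[OF order_refl] iM)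
    then show ?thesis using iI u0 \<open>(\<integral>\<omega>. Mt t \<omega> \<partial>Q) = 0\<close> by simp
  qed
  have u_ge: "u s \<ge> f x" if "s \<ge> 0" for s
  proof -
    have "AE \<omega> in Q. 0 \<le> Ig s \<omega>"
      using good'
    proof eventually_elim
      case (elim \<omega>)
      then have "\<kappa> * F s \<omega> \<le> Ig s \<omega>" "0 \<le> F s \<omega>" by auto
      moreover have "0 \<le> \<kappa> * F s \<omega>" using kappa calculation(2) by simp
      ultimately show ?case by linarith
    qed
    then have "0 \<le> (\<integral>\<omega>. Ig s \<omega> \<partial>Q)" by (rule integral_nonneg_AE)
    then show ?thesis using Ig_eq[OF that] by simp
  qed
  have Fprop: "integrable Q (F t) \<and> (\<integral>\<omega>. F t \<omega> \<partial>Q) \<ge> t * f x" if t: "t \<ge> 0" for t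
  proof -
    define Rs where "Rs (n::nat) (\<omega>::real\<Rightarrow>real) = (\<Sum>i<Suc n. f (\<omega> (t * i / Suc n))) * (t / Suc n)" for n \<omega>
    have Rlim: "(\<lambda>n. Rs n \<omega>) \<longlonglongrightarrow> F t \<omega>" if "\<omega> \<in> \<Omega>" for \<omega>
      unfolding Rs_def F_def by (rule riemann_conv[OF fpath[OF that] t])
    have Rmeas: "Rs n \<in> borel_measurable Q" for n
      unfolding Rs_def[abs_def] using t
      by (intro borel_measurable_times borel_measurable_sum borel_measurable_const fmeas) auto
    have Fmeas: "F t \<in> borel_measurable Q"
      by (rule borel_measurable_LIMSEQ_real[OF _ Rmeas]) (use Rlim spQ in auto)
    have Rbound: "norm (Rs n \<omega>) \<le> t * Mf" for n \<omega>
    proof -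
      have "\<bar>\<Sum>i<Suc n. f (\<omega> (t * i / Suc n))\<bar> \<le> (\<Sum>i<Suc n. Mf)"
        by (rule order_trans[OF sum_abs sum_mono]) (use fb in auto)
      then have "\<bar>\<Sum>i<Suc n. f (\<omega> (t * i / Suc n))\<bar> * (t / Suc n) \<le> (Suc n * Mf) * (t / Suc n)"
        using t by (intro mult_right_mono) auto
      then show ?thesis unfolding Rs_def using t by (simp add: abs_mult mult.commute)
    qed
    have aelim: "AE \<omega> in Q. (\<lambda>n. Rs n \<omega>) \<longlonglongrightarrow> F t \<omega>"
      using Rlim spQ by (intro AE_I2) auto
    have aeb: "AE \<omega> in Q. norm (Rs n \<omega>) \<le> t * Mf" for n using Rbound by simp
    have wint: "integrable Q (\<lambda>_. t * Mf)" by simp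
    have lim: "(\<lambda>n. \<integral>\<omega>. Rs n \<omega> \<partial>Q) \<longlonglongrightarrow> (\<integral>\<omega>. F t \<omega> \<partial>Q)"
      by (rule integral_dominated_convergence[where s=Rs and f="F t" and w="\<lambda>_. t * Mf", OF Fmeas Rmeas wint aelim aeb])
    have Fint: "integrable Q (F t)"
      by (rule integrable_dominated_convergence[where s=Rs and f="F t" and w="\<lambda>_. t * Mf", OF Fmeas Rmeas wint aelim aeb])
    have "(\<integral>\<omega>. Rs n \<omega> \<partial>Q) \<ge> t * f x" for n
    proof -
      have "(\<integral>\<omega>. Rs n \<omega> \<partial>Q) = (\<Sum>i<Suc n. u (t * i / Suc n)) * (t / Suc n)"
        unfolding Rs_def u_def using t
        by (simp add: Bochner_Integration.integral_sum fint Bochner_Integration.integrable_sum)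
      also have "\<dots> \<ge> (\<Sum>i<Suc n. f x) * (t / Suc n)"
        using t u_ge by (intro mult_right_mono sum_mono) auto
      moreover have "(\<Sum>i<Suc n. f x) * (t / Suc n) = t * f x" by simp
      ultimately show ?thesis by linarith
    qed
    then have "(\<integral>\<omega>. F t \<omega> \<partial>Q) \<ge> t * f x"
      by (intro LIMSEQ_le_const[OF lim]) auto
    with Fint show ?thesis by simp
  qed
  define T where "T = (Mf + 1) / (\<kappa> * f x)"
  have T0: "T \<ge> 0" using Mf0 kappa fx by (simp add: T_def)
  have "\<kappa> * (T * f x) \<le> \<kappa> * (\<integral>\<omega>. F T \<omega> \<partial>Q)" using Fprop[OF T0] kappa by simp
  also have "\<dots> = (\<integral>\<omega>. \<kappa> * F T \<omega> \<partial>Q)" by simp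
  also have "\<dots> \<le> (\<integral>\<omega>. Ig T \<omega> \<partial>Q)"
    by (rule integral_mono_AE) (use Fprop[OF T0] Ig_eq[OF T0] good' in auto)
  also have "\<dots> = u T - f x" using Ig_eq[OF T0] by simp
  also have "\<dots> \<le> Mf" using ub[OF T0] fx by simp
  finally have "\<kappa> * (T * f x) \<le> Mf" .
  moreover have "\<kappa> * (T * f x) = Mf + 1" using kappa fx by (simp add: T_def)
  ultimately show False by simp
qed

lemma tf_cont: "k \<ge> 3 \<Longrightarrow> continuous_on UNIV (tf k p q p2 q2)"
  using tf_deriv by (meson DERIV_isCont continuous_at_imp_continuous_on)
lemma tf1_cont: "k \<ge> 3 \<Longrightarrow> continuous_on UNIV (tf1 k p q p2 q2)"
  using tf1_deriv by (meson DERIV_isCont continuous_at_imp_continuous_on)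

lemma tf_zero_all:
  assumes "k \<ge> 3" "p*y+q \<le> 0 \<or> p2*y+q2 \<le> 0"
  shows "tf k p q p2 q2 y = 0 \<and> tf1 k p q p2 q2 y = 0 \<and> tf2 k p q p2 q2 y = 0"
proof (cases "p*y+q \<le> 0")
  case True
  have "tp k (p*y+q) = 0" "tp (k-1) (p*y+q) = 0" "tp (k-2) (p*y+q) = 0"
    using True assms(1) by (auto intro!: tp_neg)
  then show ?thesis by (simp add: tf_def tf1_def tf2_def)
next
  case False
  then have 2: "p2*y+q2 \<le> 0" using assms(2) by simp
  show ?thesis using S_le0[OF 2] by (simp add: tf_def tf1_def tf2_def)
qed

lemma tf_zero:
  assumes "k \<ge> 3" "p*y+q \<le> 0 \<or> p2*y+q2 \<le> 0"
  shows "tf k p q p2 q2 y = 0" "tf1 k p q p2 q2 y = 0" "tf2 k p q p2 q2 y = 0"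
  using tf_zero_all[OF assms] by auto

lemma tf_testfun:
  assumes k: "k \<ge> 3" and lo: "lo \<in> open_ivl \<alpha> \<beta>" and hi: "hi \<in> open_ivl \<alpha> \<beta>"
    and out: "\<And>y. y \<notin> {lo..hi} \<Longrightarrow> p*y+q \<le> 0 \<or> p2*y+q2 \<le> 0"
  shows "test_fun (open_ivl \<alpha> \<beta>) (tf k p q p2 q2)"
  unfolding test_fun_def using C2_tf[OF k] lo hi tf_zero(1)[OF k out] by blast

lemma tf_region:
  assumes k3: "k \<ge> 3" and p: "p^2 = 1" and s0: "s0 > 0" and B: "B \<ge> 0" and L: "L \<ge> 0"
    and kL: "real k * (s0^2/2 * (real k - 1) - B*L) \<ge> L^2"
    and reg: "p2*y+q2 \<ge> 1 \<or> p2*y+q2 \<le> 0"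
    and bnd: "p2*y+q2 \<ge> 1 \<Longrightarrow> p*y+q > 0 \<Longrightarrow> \<bar>b y\<bar> \<le> B \<and> \<sigma> y \<ge> s0 \<and> p*y+q \<le> L"
  shows "tf k p q p2 q2 y \<ge> 0 \<and> gen b \<sigma> (tf k p q p2 q2) y \<ge> 1 * tf k p q p2 q2 y"
proof (cases "p2*y+q2 \<ge> 1")
  case True
  have "tf k p q p2 q2 y = tp k (p*y+q)" by (simp add: tf_def S_ge1[OF True])
  then have "tf k p q p2 q2 y \<ge> 0" by (simp add: tp_nonneg)
  moreover have "b y * tf1 k p q p2 q2 y + 1/2 * (\<sigma> y)^2 * tf2 k p q p2 q2 y \<ge> tf k p q p2 q2 y"
    by (rule tf_ineq[OF k3 p True _ s0 B L kL]) (use bnd True in auto)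
  ultimately show ?thesis by (simp add: gen_tf[OF k3])
next
  case False
  then have "p2*y+q2 \<le> 0" using reg by simp
  then show ?thesis using tf_zero[OF k3] gen_tf[OF k3] by simp
qed

lemma ivl_convex:
  assumes "lo \<in> open_ivl \<alpha> \<beta>" "hi \<in> open_ivl \<alpha> \<beta>" "lo \<le> y" "y \<le> hi"
  shows "y \<in> open_ivl \<alpha> \<beta>"
proof -
  have a: "\<alpha> < ereal lo" and b: "ereal hi < \<beta>" using assms(1,2) by (auto simp: open_ivl_def)
  have c: "ereal lo \<le> ereal y" and d: "ereal y \<le> ereal hi" using assms(3,4) by auto
  have "\<alpha> < ereal y" using a c by (rule less_le_trans)
  moreover have "ereal y < \<beta>" using d b by (rule le_less_trans)
  ultimately show ?thesis unfolding open_ivl_def by simp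
qed

lemma ivl_below: "x \<in> open_ivl \<alpha> \<beta> \<Longrightarrow> \<exists>a\<in>open_ivl \<alpha> \<beta>. a < x"
proof -
  assume x: "x \<in> open_ivl \<alpha> \<beta>"
  then have "\<alpha> < ereal x" "ereal x < \<beta>" by (simp_all add: open_ivl_def)
  then obtain z where z: "\<alpha> < ereal z" "ereal z < ereal x" using ereal_dense2 by blast
  have "ereal z < \<beta>" using z(2) \<open>ereal x < \<beta>\<close> by (rule less_trans)
  moreover have "z < x" using z(2) by simp
  ultimately show ?thesis using z(1) unfolding open_ivl_def by blast
qed

lemma ivl_above: "x \<in> open_ivl \<alpha> \<beta> \<Longrightarrow> \<exists>a\<in>open_ivl \<alpha> \<beta>. a > x"
proof -
  assume x: "x \<in> open_ivl \<alpha> \<beta>"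
  then have "\<alpha> < ereal x" "ereal x < \<beta>" by (simp_all add: open_ivl_def)
  then obtain z where z: "ereal x < ereal z" "ereal z < \<beta>" using ereal_dense2 by blast
  have "\<alpha> < ereal z" using \<open>\<alpha> < ereal x\<close> z(1) by (rule less_trans)
  moreover have "z > x" using z(1) by simp
  ultimately show ?thesis using z(2) unfolding open_ivl_def by blast
qed

lemma side:
  fixes Q :: "(real \<Rightarrow> real) measure"
  assumes MP: "solves_MP \<alpha> \<beta> b \<sigma> x Q"
    and b_cont: "continuous_on (open_ivl \<alpha> \<beta>) b"
    and sigma_cont: "continuous_on (open_ivl \<alpha> \<beta>) \<sigma>"
    and sigma_pos: "\<forall>y\<in>open_ivl \<alpha> \<beta>. \<sigma> y > 0"
    and avoid: "AE \<omega> in Q. \<forall>s\<ge>0. \<omega> s \<notin> {c<..<d}"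
    and p: "p^2 = 1"
    and lo: "lo \<in> open_ivl \<alpha> \<beta>" and hi: "hi \<in> open_ivl \<alpha> \<beta>"
    and out: "\<And>y. y \<notin> {lo..hi} \<Longrightarrow> p*y+q \<le> 0 \<or> p2*y+q2 \<le> 0"
    and m1: "m1 \<in> open_ivl \<alpha> \<beta>" and m2: "m2 \<in> open_ivl \<alpha> \<beta>" and m12: "m1 \<le> m2"
    and reg: "\<And>y. y \<notin> {c<..<d} \<Longrightarrow> p2*y+q2 \<ge> 1 \<or> p2*y+q2 \<le> 0"
    and bndreg: "\<And>y. p2*y+q2 \<ge> 1 \<Longrightarrow> p*y+q > 0 \<Longrightarrow> y \<in> {m1..m2} \<and> p*y+q \<le> L"
    and L: "L \<ge> 0"
    and fx1: "p2*x+q2 \<ge> 1" and fx2: "p*x+q > 0"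
  shows False
proof -
  define I where "I = open_ivl \<alpha> \<beta>"
  have sub: "{m1..m2} \<subseteq> I" using ivl_convex[OF m1 m2] by (auto simp: I_def)
  have "\<exists>y\<in>{m1..m2}. \<forall>z\<in>{m1..m2}. \<sigma> y \<le> \<sigma> z"
    by (rule continuous_attains_inf) (use m12 continuous_on_subset[OF sigma_cont] sub in \<open>auto simp: I_def\<close>)
  then obtain ys where ys: "ys \<in> {m1..m2}" "\<And>z. z \<in> {m1..m2} \<Longrightarrow> \<sigma> ys \<le> \<sigma> z" by blast
  define s0 where "s0 = \<sigma> ys"
  have s0: "s0 > 0" using ys sub sigma_pos by (auto simp: s0_def I_def)
  have "\<exists>y\<in>{m1..m2}. \<forall>z\<in>{m1..m2}. \<bar>b z\<bar> \<le> \<bar>b y\<bar>"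
  proof (rule continuous_attains_sup)
    show "continuous_on {m1..m2} (\<lambda>z. \<bar>b z\<bar>)"
      by (intro continuous_on_rabs continuous_on_subset[OF b_cont]) (use sub in \<open>simp add: I_def\<close>)
  qed (use m12 in auto)
  then obtain yb where yb: "yb \<in> {m1..m2}" "\<And>z. z \<in> {m1..m2} \<Longrightarrow> \<bar>b z\<bar> \<le> \<bar>b yb\<bar>" by blast
  define B where "B = \<bar>b yb\<bar>"
  have B: "B \<ge> 0" by (simp add: B_def)
  obtain k where k3: "k \<ge> 3" and kL: "real k * (s0^2/2 * (real k - 1) - B*L) \<ge> L^2"
    using k_choice[OF s0 B L] by blast
  define f where "f = tf k p q p2 q2"
  have tfun: "test_fun (open_ivl \<alpha> \<beta>) f" unfolding f_def by (rule tf_testfun[OF k3 lo hi out])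
  have fcont: "continuous_on UNIV f" unfolding f_def by (rule tf_cont[OF k3])
  have geq: "gen b \<sigma> f = (\<lambda>y. b y * tf1 k p q p2 q2 y + 1/2 * (\<sigma> y)^2 * tf2 k p q p2 q2 y)"
    unfolding f_def using gen_tf[OF k3] by auto
  have c1: "continuous_on (open_ivl \<alpha> \<beta>) (tf1 k p q p2 q2)"
    by (rule continuous_on_subset[OF tf1_cont[OF k3]]) simp
  have c2: "continuous_on (open_ivl \<alpha> \<beta>) (tf2 k p q p2 q2)"
    by (rule continuous_on_subset[OF tf2_cont]) simp
  have gcont: "continuous_on (open_ivl \<alpha> \<beta>) (gen b \<sigma> f)"
    unfolding geq
    by (intro continuous_on_add continuous_on_mult continuous_on_power continuous_on_const b_cont sigma_cont c1 c2)
  have regy: "f y \<ge> 0 \<and> gen b \<sigma> f y \<ge> 1 * f y" if "y \<notin> {c<..<d}" for y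
    unfolding f_def
  proof (rule tf_region[OF k3 p s0 B L kL reg[OF that]])
    assume "p2*y+q2 \<ge> 1" "p*y+q > 0"
    then have "y \<in> {m1..m2}" "p*y+q \<le> L" using bndreg by auto
    then show "\<bar>b y\<bar> \<le> B \<and> \<sigma> y \<ge> s0 \<and> p*y+q \<le> L" using ys yb by (auto simp: s0_def B_def)
  qed
  have good: "AE \<omega> in Q. \<forall>s\<ge>0. f (\<omega> s) \<ge> 0 \<and> gen b \<sigma> f (\<omega> s) \<ge> 1 * f (\<omega> s)"
    using avoid
  proof eventually_elim
    case (elim \<omega>)
    show ?case
    proof (intro allI impI)
      fix s :: real assume "s \<ge> 0"
      then have "\<omega> s \<notin> {c<..<d}" using elim by blast
      then show "f (\<omega> s) \<ge> 0 \<and> gen b \<sigma> f (\<omega> s) \<ge> 1 * f (\<omega> s)" by (rule regy)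
    qed
  qed
  have fxpos: "f x > 0"
  proof -
    have "f x = tp k (p*x+q)" by (simp add: f_def tf_def S_ge1[OF fx1])
    then show ?thesis using fx2 by (simp add: tp_pos)
  qed
  show False by (rule core[OF MP tfun fcont gcont good _ fxpos]) simp
qed

lemma reach:
  fixes Q :: "(real \<Rightarrow> real) measure"
  assumes MP: "solves_MP \<alpha> \<beta> b \<sigma> x Q" and x: "x \<in> open_ivl \<alpha> \<beta>"
    and b_cont: "continuous_on (open_ivl \<alpha> \<beta>) b"
    and sigma_cont: "continuous_on (open_ivl \<alpha> \<beta>) \<sigma>"
    and sigma_pos: "\<forall>y\<in>open_ivl \<alpha> \<beta>. \<sigma> y > 0"
    and cd: "c < d" and c: "c \<in> open_ivl \<alpha> \<beta>" and d: "d \<in> open_ivl \<alpha> \<beta>"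
  shows "\<exists>t\<ge>0. measure Q {\<omega> \<in> paths \<alpha> \<beta>. \<omega> t \<in> {c<..<d}} > 0"
proof (rule ccontr)
  assume neg: "\<not> ?thesis"
  define \<Omega> where "\<Omega> = paths \<alpha> \<beta>"
  have PS: "prob_space Q" and sQ: "sets Q = sets (canon \<Omega>)" and x0: "AE \<omega> in Q. \<omega> 0 = x"
    using MP unfolding solves_MP_def \<Omega>_def by auto
  interpret prob_space Q by (rule PS)
  have spQ: "space Q = \<Omega>" using sets_eq_imp_space_eq[OF sQ] by simp
  have setQ: "{\<omega>\<in>\<Omega>. \<omega> t \<in> {c<..<d}} \<in> sets Q" if "t \<ge> 0" for t
    using gen_in_nat_filt[of t t "{c<..<d}" \<Omega>] nat_filt_canon[of \<Omega> t] sQ that by auto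
  have ae_t: "AE \<omega> in Q. \<omega> t \<notin> {c<..<d}" if t: "t \<ge> 0" for t
  proof -
    have "measure Q {\<omega>\<in>\<Omega>. \<omega> t \<in> {c<..<d}} = 0"
    proof -
      have "\<not> 0 < measure Q {\<omega>\<in>\<Omega>. \<omega> t \<in> {c<..<d}}" using neg t unfolding \<Omega>_def by blast
      then show ?thesis using measure_nonneg[of Q "{\<omega>\<in>\<Omega>. \<omega> t \<in> {c<..<d}}"] by linarith
    qed
    then have "{\<omega>\<in>\<Omega>. \<omega> t \<in> {c<..<d}} \<in> null_sets Q"
      using setQ[OF t] by (simp add: emeasure_eq_measure null_sets_def)
    then have "AE \<omega> in Q. \<omega> \<notin> {\<omega>\<in>\<Omega>. \<omega> t \<in> {c<..<d}}" by (rule AE_not_in)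
    then show ?thesis using AE_space by eventually_elim (use spQ in auto)
  qed
  have cQ: "countable {q::real. q \<in> \<rat> \<and> 0 \<le> q}"
    by (rule countable_subset[OF _ countable_rat]) auto
  have ae_q: "AE \<omega> in Q. \<forall>q\<in>{q::real. q \<in> \<rat> \<and> 0 \<le> q}. \<omega> q \<notin> {c<..<d}"
    using ae_t by (subst AE_ball_countable[OF cQ]) auto
  have avoid: "AE \<omega> in Q. \<forall>s\<ge>0. \<omega> s \<notin> {c<..<d}"
    using ae_q AE_space
  proof eventually_elim
    case (elim \<omega>)
    have cont: "continuous_on UNIV \<omega>" using elim(2) spQ by (simp add: \<Omega>_def paths_def)
    show ?case
    proof (intro allI impI notI)
      fix s :: real assume s: "s \<ge> 0" and ins: "\<omega> s \<in> {c<..<d}"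
      have "isCont \<omega> s" using cont by (simp add: continuous_on_eq_continuous_at)
      then have "(\<omega> \<longlongrightarrow> \<omega> s) (at s)" by (simp add: isCont_def)
      then have "eventually (\<lambda>y. \<omega> y \<in> {c<..<d}) (at s)"
        by (rule topological_tendstoD[OF _ open_greaterThanLessThan ins])
      then obtain \<delta> where \<delta>: "\<delta> > 0" "\<And>y. y \<noteq> s \<Longrightarrow> dist y s < \<delta> \<Longrightarrow> \<omega> y \<in> {c<..<d}"
        unfolding eventually_at by auto
      obtain q where q: "q \<in> \<rat>" "s < q" "q < s + \<delta>" using Rats_dense_in_real[of s "s + \<delta>"] \<delta>(1) by auto
      have "\<omega> q \<in> {c<..<d}" using q by (intro \<delta>(2)) (auto simp: dist_real_def)
      moreover have "q \<in> {q::real. q \<in> \<rat> \<and> 0 \<le> q}" using q s by auto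
      ultimately show False using elim(1) by blast
    qed
  qed
  consider "x \<in> {c<..<d}" | "x \<le> c" | "x \<ge> d" by force
  then show False
  proof cases
    case 1
    have "AE \<omega> in Q. False" using avoid x0 by eventually_elim (use 1 in force)
    then show False by (simp add: AE_False)
  next
    case 2
    obtain a0 where a0: "a0 \<in> open_ivl \<alpha> \<beta>" "a0 < x" using ivl_below[OF x] by blast
    define d' where "d' = (c+d)/2"
    have d'I: "d' \<in> open_ivl \<alpha> \<beta>" using ivl_convex[OF c d] cd by (simp add: d'_def)
    define e where "e = d' - c"
    have e: "e > 0" using cd by (simp add: e_def d'_def)
    define p2 where "p2 = -1/e"
    define q2 where "q2 = d'/e"
    have w: "p2*y+q2 = (d' - y)/e" for y using e by (simp add: p2_def q2_def field_simps)
    have w1: "p2*y+q2 \<ge> 1 \<longleftrightarrow> y \<le> c" for y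
      unfolding w using e by (simp add: le_divide_eq e_def)
    have w0: "p2*y+q2 \<le> 0 \<longleftrightarrow> y \<ge> d'" for y
      unfolding w using e by (simp add: divide_le_0_iff)
    show False
    proof (rule side[OF MP b_cont sigma_cont sigma_pos avoid, of 1 a0 d' "-a0" p2 q2 a0 c "c - a0"])
      show "y \<in> {a0..c} \<and> 1*y + -a0 \<le> c - a0" if "p2*y+q2 \<ge> 1" "1*y + -a0 > 0" for y
        using that w1 by auto
      show "1*y + -a0 \<le> 0 \<or> p2*y+q2 \<le> 0" if "y \<notin> {a0..d'}" for y
        using that w0 by auto
      show "p2*y+q2 \<ge> 1 \<or> p2*y+q2 \<le> 0" if "y \<notin> {c<..<d}" for y
        using that w0 w1 cd by (auto simp: d'_def)
    qed (use a0 d'I c 2 w1 in auto)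
  next
    case 3
    obtain a0 where a0: "a0 \<in> open_ivl \<alpha> \<beta>" "a0 > x" using ivl_above[OF x] by blast
    define d' where "d' = (c+d)/2"
    have d'I: "d' \<in> open_ivl \<alpha> \<beta>" using ivl_convex[OF c d] cd by (simp add: d'_def)
    define e where "e = d - d'"
    have e: "e > 0" using cd by (simp add: e_def d'_def)
    define p2 where "p2 = 1/e"
    define q2 where "q2 = -d'/e"
    have w: "p2*y+q2 = (y - d')/e" for y using e by (simp add: p2_def q2_def field_simps)
    have w1: "p2*y+q2 \<ge> 1 \<longleftrightarrow> y \<ge> d" for y
      unfolding w using e by (simp add: le_divide_eq e_def)
    have w0: "p2*y+q2 \<le> 0 \<longleftrightarrow> y \<le> d'" for y
      unfolding w using e by (simp add: divide_le_0_iff)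
    show False
    proof (rule side[OF MP b_cont sigma_cont sigma_pos avoid, of "-1" d' a0 a0 p2 q2 d a0 "a0 - d"])
      show "y \<in> {d..a0} \<and> -1*y + a0 \<le> a0 - d" if "p2*y+q2 \<ge> 1" "-1*y + a0 > 0" for y
        using that w1 by auto
      show "-1*y + a0 \<le> 0 \<or> p2*y+q2 \<le> 0" if "y \<notin> {d'..a0}" for y
        using that w0 by auto
      show "p2*y+q2 \<ge> 1 \<or> p2*y+q2 \<le> 0" if "y \<notin> {c<..<d}" for y
        using that w0 w1 cd by (auto simp: d'_def)
    qed (use a0 d'I d 3 w1 in auto)
  qed
qed

theorem lemma1:
  fixes \<alpha> \<beta> :: ereal and b \<sigma> R :: "real \<Rightarrow> real" and r xR :: real
    and P :: "real \<Rightarrow> (real \<Rightarrow> real) measure"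
  assumes ab: "\<alpha> < \<beta>"
    and b_cont: "continuous_on (open_ivl \<alpha> \<beta>) b"
    and sigma_cont: "continuous_on (open_ivl \<alpha> \<beta>) \<sigma>"
    and sigma_pos: "\<forall>x\<in>open_ivl \<alpha> \<beta>. \<sigma> x > 0"
    and natural: "natural_endpoints \<alpha> \<beta> b \<sigma>"
    and P_sol: "\<forall>x\<in>open_ivl \<alpha> \<beta>. solves_MP \<alpha> \<beta> b \<sigma> x (P x)"
    and P_unique: "\<forall>x\<in>open_ivl \<alpha> \<beta>. \<forall>Q. solves_MP \<alpha> \<beta> b \<sigma> x Q \<longrightarrow> Q = P x"
    and r_pos: "r > 0"
    and R_C2: "C2_on (open_ivl \<alpha> \<beta>) R"
    and A1: "\<forall>x\<in>open_ivl \<alpha> \<beta>.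
               (\<integral>\<^sup>+ \<omega>. (SUP t\<in>{0..}. ennreal (exp (- r * t) * \<bar>R (\<omega> t)\<bar>)) \<partial>P x) < \<infinity>"
    and A2: "\<forall>x\<in>open_ivl \<alpha> \<beta>. AE \<omega> in P x. ((\<lambda>t. exp (- r * t) * R (\<omega> t)) \<longlongrightarrow> 0) at_top"
    and A3: "\<exists>x0\<in>open_ivl \<alpha> \<beta>. (\<forall>x\<in>open_ivl \<alpha> \<beta>. x < x0 \<longrightarrow> gen b \<sigma> R x - r * R x < 0)
                                  \<and> (\<forall>x\<in>open_ivl \<alpha> \<beta>. x > x0 \<longrightarrow> gen b \<sigma> R x - r * R x > 0)"
    and xR_in: "xR \<in> open_ivl \<alpha> \<beta>"
    and xR_thr: "{x \<in> open_ivl \<alpha> \<beta>. value_fn \<alpha> \<beta> P r R x = R x} = {x \<in> open_ivl \<alpha> \<beta>. x \<le> xR}"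
  shows "(\<forall>x\<in>open_ivl \<alpha> \<beta>. value_fn \<alpha> \<beta> P r R x > 0) \<and> (\<forall>x\<in>open_ivl \<alpha> \<beta>. x \<le> xR \<longrightarrow> R x > 0)"
proof -
  define I where "I = open_ivl \<alpha> \<beta>"
  define \<Omega> where "\<Omega> = paths \<alpha> \<beta>"
  define ST where "ST = stop_times (paths \<alpha> \<beta>) P (open_ivl \<alpha> \<beta>)"
  define J where "J x \<tau> = integral\<^sup>L (completion (P x)) (disc_payoff r R \<tau>)" for x \<tau>
  have Vdef: "value_fn \<alpha> \<beta> P r R x = (SUP \<tau>\<in>ST. J x \<tau>)" for x
    by (simp add: value_fn_def ST_def J_def)
  have Psets: "sets (P x) = sets (canon \<Omega>)" and Pprob: "prob_space (P x)" if "x \<in> I" for x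
    using P_sol that unfolding solves_MP_def I_def \<Omega>_def by auto
  have Pspace: "space (P x) = \<Omega>" if "x \<in> I" for x
    using sets_eq_imp_space_eq[OF Psets[OF that]] by simp
  have bdd: "bdd_above (J x ` ST)" if "x \<in> I" for x
  proof -
    have "J x \<tau> \<le> enn2real (\<integral>\<^sup>+ \<omega>. (SUP t\<in>{0..}. ennreal (exp (- r * t) * \<bar>R (\<omega> t)\<bar>)) \<partial>P x)" for \<tau>
      unfolding J_def by (rule integral_disc_le) (use A1 that in \<open>auto simp: I_def\<close>)
    then show ?thesis by (intro bdd_aboveI) blast
  qed
  define tinf where "tinf = (\<lambda>\<omega>::real\<Rightarrow>real. if \<omega> \<in> {} then ennreal 0 else \<infinity>)"
  have tinfST: "tinf \<in> ST" unfolding tinf_def ST_def by (rule stop_indicator) auto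
  have STne: "ST \<noteq> {}" using tinfST by blast
  have dtinf: "disc_payoff r R tinf = (\<lambda>_. 0)" by (rule ext) (simp add: tinf_def disc_payoff_def)
  have Jtinf: "J x tinf = 0" for x
    unfolding J_def dtinf by simp
  have V_ge: "J x \<tau> \<le> value_fn \<alpha> \<beta> P r R x" if "x \<in> I" "\<tau> \<in> ST" for x \<tau>
    unfolding Vdef by (rule cSUP_upper[OF that(2) bdd[OF that(1)]])
  have V0: "value_fn \<alpha> \<beta> P r R x \<ge> 0" if "x \<in> I" for x
    using V_ge[OF that tinfST] Jtinf by simp
  obtain R' R'' where RD: "\<And>y. y \<in> I \<Longrightarrow> (R has_real_derivative R' y) (at y) \<and> (R' has_real_derivative R'' y) (at y)"
    using R_C2 unfolding C2_on_def I_def by blast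
  have Rcont: "continuous_on I R"
    using RD by (meson DERIV_isCont continuous_at_imp_continuous_on)
  have claimA: "\<exists>y0\<in>I. R y0 > 0"
  proof (rule ccontr)
    assume "\<not> ?thesis"
    then have Rle: "\<And>y. y \<in> I \<Longrightarrow> R y \<le> 0" by force
    have Vz: "value_fn \<alpha> \<beta> P r R x = 0" if x: "x \<in> I" for x
    proof -
      have "J x \<tau> \<le> 0" if "\<tau> \<in> ST" for \<tau>
      proof -
        have "AE \<omega> in completion (P x). 0 \<le> - disc_payoff r R \<tau> \<omega>"
        proof (rule AE_I2)
          fix \<omega> assume "\<omega> \<in> space (completion (P x))"
          then have "\<omega> \<in> \<Omega>" using Pspace[OF x] by simp
          then have "\<omega> s \<in> I" for s unfolding \<Omega>_def paths_def I_def by auto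
          then show "0 \<le> - disc_payoff r R \<tau> \<omega>"
            unfolding disc_payoff_def using Rle by (auto intro!: mult_nonneg_nonpos)
        qed
        then have "0 \<le> integral\<^sup>L (completion (P x)) (\<lambda>\<omega>. - disc_payoff r R \<tau> \<omega>)"
          by (rule integral_nonneg_AE)
        then show ?thesis unfolding J_def by simp
      qed
      then have "value_fn \<alpha> \<beta> P r R x \<le> 0" unfolding Vdef by (intro cSUP_least STne) auto
      then show ?thesis using V0[OF x] by simp
    qed
    have Rzero: "R y = 0" if "y \<in> I" "y \<le> xR" for y
    proof -
      have "y \<in> {x \<in> open_ivl \<alpha> \<beta>. x \<le> xR}" using that by (simp add: I_def)
      then have "y \<in> {x \<in> open_ivl \<alpha> \<beta>. value_fn \<alpha> \<beta> P r R x = R x}" using xR_thr by simp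
      then show ?thesis using Vz[OF that(1)] by simp
    qed
    obtain x0 where x0: "x0 \<in> I" "\<And>x. x \<in> I \<Longrightarrow> x < x0 \<Longrightarrow> gen b \<sigma> R x - r * R x < 0"
      using A3 unfolding I_def by blast
    have mI: "min xR x0 \<in> I" using xR_in x0(1) by (simp add: I_def min_def)
    obtain z where z: "z \<in> I" "z < min xR x0" using ivl_below[of "min xR x0" \<alpha> \<beta>] mI by (auto simp: I_def)
    obtain lo where lo: "lo \<in> I" "lo < z" using ivl_below[of z \<alpha> \<beta>] z by (auto simp: I_def)
    define S where "S = {lo<..<xR}"
    have S: "open S" "z \<in> S" using z lo by (auto simp: S_def)
    have SI: "y \<in> I" "y \<le> xR" if "y \<in> S" for y
      using that ivl_convex[of lo \<alpha> \<beta> xR y] lo xR_in by (auto simp: S_def I_def)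
    have d1: "deriv R y = 0" if "y \<in> S" for y
    proof -
      have "((\<lambda>_. 0) has_real_derivative 0) (at y)" by simp
      then have "(R has_real_derivative 0) (at y)"
        by (rule has_field_derivative_transform_within_open[OF _ S(1) that]) (use SI Rzero in auto)
      then show ?thesis by (rule DERIV_imp_deriv)
    qed
    have d2: "deriv (deriv R) z = 0"
    proof -
      have "((\<lambda>_. 0) has_real_derivative 0) (at z)" by simp
      then have "(deriv R has_real_derivative 0) (at z)"
        by (rule has_field_derivative_transform_within_open[OF _ S(1) S(2)]) (use d1 in auto)
      then show ?thesis by (rule DERIV_imp_deriv)
    qed
    have "gen b \<sigma> R z - r * R z = 0"
      using d1[OF S(2)] d2 Rzero[OF z(1)] z by (simp add: gen_def)
    moreover have "gen b \<sigma> R z - r * R z < 0" using x0(2)[OF z(1)] z by simp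
    ultimately show False by simp
  qed
  then obtain y0 where y0: "y0 \<in> I" "R y0 > 0" by blast
  define eps where "eps = R y0 / 2"
  have eps: "eps > 0" "eps < R y0" using y0 by (simp_all add: eps_def)
  have "isCont R y0" using RD[OF y0(1)] by (meson DERIV_isCont)
  then have "(R \<longlongrightarrow> R y0) (at y0)" by (simp add: isCont_def)
  then have "eventually (\<lambda>y. eps < R y) (at y0)" using eps(2) by (rule order_tendstoD)
  then obtain \<delta> where \<delta>: "\<delta> > 0" "\<And>y. y \<noteq> y0 \<Longrightarrow> dist y y0 < \<delta> \<Longrightarrow> eps < R y"
    unfolding eventually_at by auto
  obtain lo where lo: "lo \<in> I" "lo < y0" using ivl_below[of y0 \<alpha> \<beta>] y0 by (auto simp: I_def)
  obtain hi where hi: "hi \<in> I" "hi > y0" using ivl_above[of y0 \<alpha> \<beta>] y0 by (auto simp: I_def)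
  define c where "c = max lo (y0 - \<delta>/2)"
  define d where "d = min hi (y0 + \<delta>/2)"
  have cd: "c < d" "c \<le> y0" "y0 \<le> d" using lo hi \<delta> by (auto simp: c_def d_def)
  have cI: "c \<in> I" using ivl_convex[of lo \<alpha> \<beta> y0 c] lo y0 cd by (auto simp: I_def c_def)
  have dI: "d \<in> I" using ivl_convex[of y0 \<alpha> \<beta> hi d] hi y0 cd by (auto simp: I_def d_def)
  have cdI: "{c..d} \<subseteq> I" using ivl_convex[of c \<alpha> \<beta> d] cI dI by (auto simp: I_def)
  have Rpos: "R y > eps" if "y \<in> {c..d}" for y
  proof (cases "y = y0")
    case False
    have "dist y y0 < \<delta>" using that \<delta> by (auto simp: c_def d_def dist_real_def)
    then show ?thesis using \<delta>(2) False by blast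
  qed (use eps in simp)
  have claimB: "value_fn \<alpha> \<beta> P r R x > 0" if x: "x \<in> I" for x
  proof -
    interpret prob_space "P x" by (rule Pprob[OF x])
    obtain t where t: "t \<ge> 0" "measure (P x) {\<omega> \<in> paths \<alpha> \<beta>. \<omega> t \<in> {c<..<d}} > 0"
      using reach[of \<alpha> \<beta> b \<sigma> x "P x" c d] P_sol x b_cont sigma_cont sigma_pos cd cI dI
      by (auto simp: I_def)
    define A where "A = {\<omega>\<in>\<Omega>. \<omega> t \<in> {c..d}}"
    have A: "A \<in> sets (nat_filt \<Omega> t)" unfolding A_def by (rule gen_in_nat_filt) (use t in auto)
    define \<tau> where "\<tau> = (\<lambda>\<omega>::real\<Rightarrow>real. if \<omega> \<in> A then ennreal t else \<infinity>)"
    have \<tau>ST: "\<tau> \<in> ST" unfolding \<tau>_def ST_def by (rule stop_indicator[OF t(1)]) (use A in \<open>simp add: \<Omega>_def\<close>)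
    define h where "h y = indicator {c..d} y *\<^sub>R R y" for y
    have hmeas: "h \<in> borel_measurable borel" unfolding h_def[abs_def]
      by (rule borel_measurable_continuous_on_indicator) (use continuous_on_subset[OF Rcont cdI] in auto)
    have evQ: "(\<lambda>\<omega>. \<omega> t) \<in> borel_measurable (P x)"
      using eval_meas_canon[OF t(1), of \<Omega>] measurable_cong_sets[OF Psets[OF x] refl] by blast
    define g where "g \<omega> = exp (- r * t) * h (\<omega> t)" for \<omega> :: "real \<Rightarrow> real"
    have gmeas: "g \<in> borel_measurable (P x)" unfolding g_def[abs_def]
      by (intro borel_measurable_times borel_measurable_const measurable_compose[OF evQ hmeas])
    have disc_eq: "disc_payoff r R \<tau> \<omega> = g \<omega>" if "\<omega> \<in> space (P x)" for \<omega>
    proof -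
      have "disc_payoff r R \<tau> \<omega> = (if \<omega> \<in> A then exp (- r * t) * R (\<omega> t) else 0)"
        unfolding \<tau>_def by (rule disc_indicator[OF t(1)])
      then show ?thesis using that Pspace[OF x] by (simp add: g_def h_def A_def indicator_def)
    qed
    have "compact (R ` {c..d})" by (rule compact_continuous_image[OF continuous_on_subset[OF Rcont cdI]]) simp
    then obtain MR where MR: "\<And>y. y \<in> {c..d} \<Longrightarrow> \<bar>R y\<bar> \<le> MR"
      using compact_imp_bounded bounded_iff by (metis imageI real_norm_def)
    have hb: "\<bar>h y\<bar> \<le> max MR 0" for y
    proof (cases "y \<in> {c..d}")
      case True
      then show ?thesis using MR[OF True] by (simp add: h_def)
    qed (simp add: h_def)
    have gint: "integrable (P x) g"
    proof (rule Bochner_Integration.integrable_bound[where f="\<lambda>_. exp (- r * t) * max MR 0"])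
      show "AE \<omega> in P x. norm (g \<omega>) \<le> norm (exp (- r * t) * max MR 0)"
        using hb by (auto simp: g_def abs_mult intro!: mult_left_mono)
    qed (use gmeas in auto)
    have hlow: "h y \<ge> eps * indicator {c<..<d} y" for y
    proof (cases "y \<in> {c..d}")
      case True
      then have "R y > eps" by (rule Rpos)
      then show ?thesis using True eps by (auto simp: h_def indicator_def)
    qed (auto simp: h_def indicator_def)
    define E where "E = {\<omega> \<in> space (P x). \<omega> t \<in> {c<..<d}}"
    have Esets: "E \<in> sets (P x)"
    proof -
      have "(\<lambda>\<omega>. \<omega> t) -` {c<..<d} \<inter> space (P x) \<in> sets (P x)"
        by (rule measurable_sets[OF evQ]) simp
      then show ?thesis unfolding E_def by (simp add: Int_def conj_commute)
    qed
    have Emeas: "measure (P x) E > 0" using t(2) Pspace[OF x] by (simp add: E_def \<Omega>_def)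
    have "J x \<tau> = integral\<^sup>L (completion (P x)) g"
      unfolding J_def by (rule Bochner_Integration.integral_cong) (use disc_eq in auto)
    also have "\<dots> = integral\<^sup>L (P x) g" by (rule integral_completion[OF gmeas])
    also have "\<dots> \<ge> integral\<^sup>L (P x) (\<lambda>\<omega>. exp (- r * t) * eps * indicator E \<omega>)"
    proof (rule integral_mono[OF _ gint])
      have "integrable (P x) (indicator E :: _ \<Rightarrow> real)"
        using Esets by (intro integrable_real_indicator) (simp_all add: less_top[symmetric])
      then show "integrable (P x) (\<lambda>\<omega>. exp (- r * t) * eps * indicator E \<omega>)" by simp
      fix \<omega> assume "\<omega> \<in> space (P x)"
      then have "indicator E \<omega> = (indicator {c<..<d} (\<omega> t) :: real)" by (simp add: E_def indicator_def)
      moreover have "exp (- r * t) * (eps * indicator {c<..<d} (\<omega> t)) \<le> exp (- r * t) * h (\<omega> t)"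
        using hlow by (intro mult_left_mono) auto
      ultimately show "exp (- r * t) * eps * indicator E \<omega> \<le> g \<omega>" by (simp add: g_def mult.assoc)
    qed
    also have "integral\<^sup>L (P x) (\<lambda>\<omega>. exp (- r * t) * eps * indicator E \<omega>) = exp (- r * t) * eps * measure (P x) E"
      using Esets by (simp add: Int_absorb2 sets.sets_into_space)
    finally have "J x \<tau> \<ge> exp (- r * t) * eps * measure (P x) E" .
    moreover have "exp (- r * t) * eps * measure (P x) E > 0" using eps Emeas by simp
    ultimately show ?thesis using V_ge[OF x \<tau>ST] by linarith
  qed
  show ?thesis
  proof (intro conjI ballI impI)
    fix x assume "x \<in> open_ivl \<alpha> \<beta>"
    then show "value_fn \<alpha> \<beta> P r R x > 0" using claimB by (simp add: I_def)
  next
    fix x assume x: "x \<in> open_ivl \<alpha> \<beta>" and le: "x \<le> xR"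
    then have "value_fn \<alpha> \<beta> P r R x = R x" using xR_thr by blast
    moreover have "value_fn \<alpha> \<beta> P r R x > 0" using claimB x by (simp add: I_def)
    ultimately show "R x > 0" by simp
  qed
qed

end
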